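(* Let $V=(\mathbb F_2)^n$ with $n=bs$, decomposed into bricks $V=V_1\oplus\cdots\oplus V_b$, $\dim V_j=s$. Let $r\ge2$ and $\rho_1,\dots,\rho_r\in\mathrm{Sym}(V)$, and let $\Phi$ be the $r$-round Feistel network whose $i$-th round applies the Feistel operator $\bar\rho_i$. Assume that for every $1\le i\le r$, $0\rho_i=0$ and $\rho_i=\gamma_i\lambda_i$, where \begin{enumerate} \item[a)] $\gamma_i$ is a parallel map whose S-boxes are weakly $2^\delta$-uniform and strongly $\delta$-anti-invariant, for some $\delta<s$; \item[b)] $\lambda_i$ is a linear strongly proper diffusion layer. \end{enumerate} Suppose there exists a sequence of $r+1$ non-trivial linear partitions $\mathcal L(\mathcal U_1),\dots,\mathcal L(\mathcal U_{r+1})$ of $V\times V$, where each $\mathcal U_i$ is a proper non-trivial subgroup of $V\times V$ and $\mathcal L(\mathcal U_i)\bar\rho_i=\mathcal L(\mathcal U_{i+1})$ for all $1\le i\le r$. For each $i$ let $A_i=\{a\in V\mid (a,c)\in\mathcal U_i\text{ for some }c\in V\}$ and $D_i=\{d\in V\mid (0,d)\in\mathcal U_i\}$. Then none of the following conditions holds: \begin{enumerate} \item there exists $1\le i\le r-1$ such that $\mathcal L(\mathcal U_{i+1})\bar\rho_{i+1}=\mathcal L(\mathcal U_i)$; \item there exists $1\le i\le r-1$ such that $\mathcal U_i=A_i\times D_i$, $\mathcal U_{i+1}=A_{i+1}\times D_{i+1}$ and $\mathcal U_{i+2}=A_{i+2}\times D_{i+2}$; \item there exists $1\le i\le r$ such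 that $D_i=\{0\}$ and $D_{i+1}=\{0\}$; \item there exists $1\le i\le r$ such that $A_i=\{0\}$ and $A_{i+1}=\{0\}$. \end{enumerate}
   Context: Maps act on the right and are composed left to right ($\gamma\lambda$ means first $\gamma$, then $\lambda$); $+$ is bitwise XOR. The Feistel operator induced by $\rho\in\mathrm{Sym}(V)$ is $\bar\rho:V\times V\to V\times V$, $(x_1,x_2)\bar\rho=(x_2,\ x_1+x_2\rho)$. A wall is a subspace $\bigoplus_{j\in I}V_j$ with $\emptyset\ne I\subsetneq\{1,\dots,b\}$. A parallel map is $\gamma\in\mathrm{Sym}(V)$ acting brickwise, $\gamma=(\gamma^{(1)},\dots,\gamma^{(b)})$ with $\gamma^{(j)}\in\mathrm{Sym}(V_j)$ (its S-boxes, viewed as permutations of $(\mathbb F_2)^s$). A linear $\lambda\in\mathrm{GL}(V)$ is a strongly proper diffusion layer if there are no walls $W,W'$ with $W\lambda=W'$. A map $f\in\mathrm{Sym}((\mathbb F_2)^s)$ is weakly $d$-uniform if for each $a\ne0$, $|\{xf+(x+a)f\mid x\in(\mathbb F_2)^s\}|>2^{s-1}/d$. For $1\le\epsilon<s$, $f$ with $0f=0$ is strongly $\epsilon$-anti-invariant if for all proper non-trivial subspaces $U,W$ of $(\mathbb F_2)^s$, $Uf=W$ implies $\dim U=\dim W<s-\epsilon$. For a subgroup $\mathcal U$ of $V\times V$, $\mathcal L(\mathcal U)=\{\mathcal U+v\mid v\in V\times V\}$ (non-trivial if neither the partition into singletons nor $\{V\times V\}$), and $\mathcal A f=\{Af\mid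 A\in\mathcal A\}$ for a partition $\mathcal A$. *)

theory Defs
  imports "HOL-Analysis.Analysis" "HOL-Library.Z2"
begin

text \<open>The space V = (F_2)^n with n = b*s is modelled as (bit^'s)^'b: the b bricks V_j
  are the components indexed by 'b, each brick is (F_2)^s = bit^'s.
  Maps act on the right; the composition "first gamma, then lambda" is lambda o gamma.\<close>

type_synonym ('s,'b) blockvec = "bit ^ 's ^ 'b"

definition feistel :: "('v::plus \<Rightarrow> 'v) \<Rightarrow> 'v \<times> 'v \<Rightarrow> 'v \<times> 'v" where
  "feistel \<rho> = (\<lambda>(x1, x2). (x2, x1 + \<rho> x2))"

definition wall :: "'b::finite set \<Rightarrow> ('a::zero ^ 'b) set" where
  "wall I = {x. \<forall>j. j \<notin> I \<longrightarrow> x $ j = 0}"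

definition is_wall :: "('a::zero ^ 'b::finite) set \<Rightarrow> bool" where
  "is_wall W \<longleftrightarrow> (\<exists>I. I \<noteq> {} \<and> I \<noteq> UNIV \<and> W = wall I)"

definition parallel_with :: "('b::finite \<Rightarrow> 'c \<Rightarrow> 'c) \<Rightarrow> ('c ^ 'b \<Rightarrow> 'c ^ 'b) \<Rightarrow> bool" where
  "parallel_with f \<gamma> \<longleftrightarrow> bij \<gamma> \<and> (\<forall>j. bij (f j)) \<and> (\<forall>x. \<gamma> x = (\<chi> j. f j (x $ j)))"

definition scaleV :: "bit \<Rightarrow> bit ^ 's::finite ^ 'b::finite \<Rightarrow> bit ^ 's ^ 'b" where
  "scaleV c x = (\<chi> j. c *s (x $ j))"

definition strongly_proper_diffusion :: "(bit ^ 's::finite ^ 'b::finite \<Rightarrow> bit ^ 's ^ 'b) \<Rightarrow> bool" where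
  "strongly_proper_diffusion L \<longleftrightarrow>
     Vector_Spaces.linear scaleV scaleV L \<and> bij L \<and>
     \<not> (\<exists>W W'. is_wall W \<and> is_wall W' \<and> L ` W = W')"

definition weakly_uniform :: "real \<Rightarrow> (bit ^ 's::finite \<Rightarrow> bit ^ 's) \<Rightarrow> bool" where
  "weakly_uniform d f \<longleftrightarrow>
     (\<forall>a. a \<noteq> 0 \<longrightarrow>
        real (card {f x + f (x + a) | x. True}) > 2 ^ (CARD('s) - 1) / d)"

definition strongly_anti_invariant :: "nat \<Rightarrow> (bit ^ 's::finite \<Rightarrow> bit ^ 's) \<Rightarrow> bool" where
  "strongly_anti_invariant \<epsilon> f \<longleftrightarrow>
     f 0 = 0 \<and>
     (\<forall>U W. vec.subspace U \<and> U \<noteq> {0} \<and> U \<noteq> UNIV \<and>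
            vec.subspace W \<and> W \<noteq> {0} \<and> W \<noteq> UNIV \<and> f ` U = W \<longrightarrow>
            vec.dim U = vec.dim W \<and> vec.dim W < CARD('s) - \<epsilon>)"

definition is_subgroup :: "'a::ab_group_add set \<Rightarrow> bool" where
  "is_subgroup U \<longleftrightarrow> 0 \<in> U \<and> (\<forall>x\<in>U. \<forall>y\<in>U. x + y \<in> U) \<and> (\<forall>x\<in>U. - x \<in> U)"

definition lin_partition :: "'a::plus set \<Rightarrow> 'a set set" where
  "lin_partition U = {(\<lambda>u. u + v) ` U | v. True}"

definition nontrivial_partition :: "'a set set \<Rightarrow> bool" where
  "nontrivial_partition P \<longleftrightarrow> P \<noteq> {{x} | x. True} \<and> P \<noteq> {UNIV}"

definition part_image :: "'a set set \<Rightarrow> ('a \<Rightarrow> 'b) \<Rightarrow> 'b set set" where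
  "part_image P f = (\<lambda>A. f ` A) ` P"

definition first_proj :: "('v \<times> 'v) set \<Rightarrow> 'v set" where
  "first_proj U = {a. \<exists>c. (a, c) \<in> U}"

definition zero_fibre :: "('v::zero \<times> 'v) set \<Rightarrow> 'v set" where
  "zero_fibre U = {d. (0, d) \<in> U}"

end

theory Submission
  imports Defs
begin

lemma bit_cases2: "(x::bit) = 0 \<or> x = 1" by (cases x) auto

lemma finite_bit: "finite (UNIV :: bit set)"
proof -
  have "UNIV = {0::bit, 1}" using bit_cases2 by auto
  then show ?thesis by (metis finite.emptyI finite.insertI)
qed

lemma card_bit: "card (UNIV :: bit set) = 2"
proof -
  have u: "UNIV = {0::bit, 1}" using bit_cases2 by auto
  have "card {0::bit, 1} = 2" by simp
  then show ?thesis by (subst u)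
qed

lemma finite_vec_UNIV:
  assumes "finite (UNIV :: 'a set)"
  shows "finite (UNIV :: ('a^'n::finite) set)"
proof -
  have "UNIV = vec_lambda ` (UNIV :: ('n \<Rightarrow> 'a) set)"
    by (metis surj_def vec_nth_inverse)
  moreover have "finite (UNIV :: ('n \<Rightarrow> 'a) set)"
    using finite_PiE[of "UNIV::'n set" "\<lambda>_. UNIV::'a set"] assms by (simp add: PiE_UNIV)
  ultimately show ?thesis by (metis finite_imageI)
qed

lemma finite_V1: "finite (S :: (bit^'s::finite) set)"
  by (rule finite_subset[OF subset_UNIV finite_vec_UNIV[OF finite_bit]])

lemma finite_V: "finite (S :: (bit^'s::finite^'b::finite) set)"
  by (rule finite_subset[OF subset_UNIV finite_vec_UNIV[OF finite_vec_UNIV[OF finite_bit]]])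

lemma vadd_self[simp]: "(x::bit^'s::finite) + x = 0"
  by (simp add: vec_eq_iff)
lemma vadd_self2[simp]: "(x::bit^'s::finite) + (x + y) = y"
  by (simp add: add.assoc[symmetric])
lemma Vadd_self[simp]: "(x::bit^'s::finite^'b::finite) + x = 0"
  by (simp add: vec_eq_iff)
lemma Vadd_self2[simp]: "(x::bit^'s::finite^'b::finite) + (x + y) = y"
  by (simp add: add.assoc[symmetric])

lemma lin_add:
  assumes "Vector_Spaces.linear s1 s2 L"
  shows "L (x + y) = L x + L y"
  using assms by (metis Vector_Spaces.linear_def module_hom.add)

lemma card_subspace_le:
  assumes "vec.subspace (W :: (bit^'s::finite) set)"
  shows "card W \<le> 2 ^ vec.dim W"
proof -
  obtain B where B: "B \<subseteq> W" "vec.independent B" "W \<subseteq> vec.span B" "card B = vec.dim W"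
    using vec.basis_exists by blast
  have fB: "finite B" using finite_V1 .
  have sp: "vec.span B = range (\<lambda>u. \<Sum>v\<in>B. u v *s v)"
    using vec.span_finite[OF fB] .
  have "range (\<lambda>u. \<Sum>v\<in>B. u v *s v) = (\<lambda>u. \<Sum>v\<in>B. u v *s v) ` (B \<rightarrow>\<^sub>E (UNIV::bit set))"
  proof (rule set_eqI, rule iffI)
    fix z assume "z \<in> range (\<lambda>u. \<Sum>v\<in>B. u v *s v)"
    then obtain u where z: "z = (\<Sum>v\<in>B. u v *s v)" by blast
    have "z = (\<Sum>v\<in>B. restrict u B v *s v)" unfolding z by (rule sum.cong) auto
    moreover have "restrict u B \<in> B \<rightarrow>\<^sub>E (UNIV::bit set)" by simp
    ultimately show "z \<in> (\<lambda>u. \<Sum>v\<in>B. u v *s v) ` (B \<rightarrow>\<^sub>E (UNIV::bit set))" by blast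
  next
    fix z assume "z \<in> (\<lambda>u. \<Sum>v\<in>B. u v *s v) ` (B \<rightarrow>\<^sub>E (UNIV::bit set))"
    then show "z \<in> range (\<lambda>u. \<Sum>v\<in>B. u v *s v)" by blast
  qed
  then have "card (vec.span B) = card ((\<lambda>u. \<Sum>v\<in>B. u v *s v) ` (B \<rightarrow>\<^sub>E (UNIV::bit set)))"
    using sp by simp
  also have "\<dots> \<le> card (B \<rightarrow>\<^sub>E (UNIV::bit set))"
    by (rule card_image_le) (simp add: fB finite_bit finite_PiE)
  also have "\<dots> = 2 ^ card B" using card_funcsetE[OF fB, of "UNIV::bit set"] card_bit by simp
  finally have "card (vec.span B) \<le> 2 ^ card B" .
  moreover have "card W \<le> card (vec.span B)" using B(3) finite_V1[of "vec.span B"] by (simp add: card_mono)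
  ultimately show ?thesis using B(4) by simp
qed


lemma Padd_self[simp]: "(w::(bit^'s::finite^'b::finite) \<times> (bit^'s^'b)) + w = 0"
  by (cases w) (simp add: zero_prod_def)

lemma feistel_Pair[simp]: "feistel \<rho> (a, b) = (b, a + \<rho> b)"
  by (simp add: feistel_def)

lemma sg_zero: "is_subgroup U \<Longrightarrow> 0 \<in> U" by (simp add: is_subgroup_def)
lemma sg_add: "is_subgroup U \<Longrightarrow> x \<in> U \<Longrightarrow> y \<in> U \<Longrightarrow> x + y \<in> U" by (simp add: is_subgroup_def)
lemma sg_neg: "is_subgroup U \<Longrightarrow> x \<in> U \<Longrightarrow> - x \<in> U" by (simp add: is_subgroup_def)

lemma sg_coset:
  assumes "is_subgroup U" "v \<in> U"
  shows "(\<lambda>u. u + v) ` U = U"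
proof
  show "(\<lambda>u. u + v) ` U \<subseteq> U" using sg_add[OF assms(1) _ assms(2)] by auto
  show "U \<subseteq> (\<lambda>u. u + v) ` U"
  proof
    fix u assume u: "u \<in> U"
    have "u + - v \<in> U" using sg_add[OF assms(1) u sg_neg[OF assms]] .
    moreover have "u = (u + - v) + v" by simp
    ultimately show "u \<in> (\<lambda>u. u + v) ` U" by blast
  qed
qed

lemma in_lin_partition: "(\<lambda>u. u + v) ` U \<in> lin_partition U"
  unfolding lin_partition_def by blast

lemma chain_image:
  fixes U U' :: "((bit^'s::finite^'b::finite) \<times> (bit^'s^'b)) set"
  assumes sU: "is_subgroup U" and sU': "is_subgroup U'" and r0: "\<rho> 0 = 0"
    and ch: "part_image (lin_partition U) (feistel \<rho>) = lin_partition U'"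
  shows "feistel \<rho> ` U = U'"
proof -
  have "U = (\<lambda>u. u + 0) ` U" by simp
  then have "U \<in> lin_partition U" using in_lin_partition by metis
  then have "feistel \<rho> ` U \<in> lin_partition U'" using ch unfolding part_image_def by blast
  then obtain v where v: "feistel \<rho> ` U = (\<lambda>u. u + v) ` U'" unfolding lin_partition_def by blast
  have f0: "feistel \<rho> 0 = 0" using r0 by (simp add: zero_prod_def)
  have "0 \<in> feistel \<rho> ` U" using sg_zero[OF sU] f0 by force
  then obtain u where u: "u \<in> U'" "0 = u + v" using v by auto
  then have "v = - u" by (simp add: eq_neg_iff_add_eq_0 add.commute)
  then have "v \<in> U'" using sg_neg[OF sU' u(1)] by simp
  then show ?thesis using v sg_coset[OF sU'] by simp
qed

lemma chain_P:
  fixes U U' :: "((bit^'s::finite^'b::finite) \<times> (bit^'s^'b)) set"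
  assumes sU: "is_subgroup U" and sU': "is_subgroup U'" and r0: "\<rho> 0 = 0"
    and ch: "part_image (lin_partition U) (feistel \<rho>) = lin_partition U'"
    and ac: "(a, c) \<in> U"
  shows "(\<rho> (c + x) + \<rho> x + \<rho> c, 0) \<in> U"
proof -
  have img: "feistel \<rho> ` U = U'" by (rule chain_image[OF sU sU' r0 ch])
  have "feistel \<rho> ` ((\<lambda>u. u + (0,x)) ` U) \<in> lin_partition U'"
    using ch in_lin_partition unfolding part_image_def by blast
  then obtain w where w: "feistel \<rho> ` ((\<lambda>u. u + (0,x)) ` U) = (\<lambda>u. u + w) ` U'"
    unfolding lin_partition_def by blast
  have "feistel \<rho> ((a,c) + (0,x)) \<in> (\<lambda>u. u + w) ` U'" using w ac by blast
  then obtain u1 where u1: "u1 \<in> U'" "(c + x, a + \<rho> (c + x)) = u1 + w" by auto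
  have "(0,0) \<in> U" using sg_zero[OF sU] by (simp add: zero_prod_def)
  then have "feistel \<rho> ((0,0) + (0,x)) \<in> (\<lambda>u. u + w) ` U'" using w by blast
  then obtain u2 where u2: "u2 \<in> U'" "(x, \<rho> x) = u2 + w" by auto
  have "(c + x, a + \<rho> (c + x)) + (x, \<rho> x) = u1 + u2 + (w + w)"
    using u1(2) u2(2) by (simp add: add_ac)
  then have "(c + x, a + \<rho> (c + x)) + (x, \<rho> x) = u1 + u2" by simp
  moreover have "(c + x, a + \<rho> (c + x)) + (x, \<rho> x) = (c, a + \<rho> (c + x) + \<rho> x)"
    by (simp add: add.assoc)
  ultimately have e1: "(c, a + \<rho> (c + x) + \<rho> x) \<in> U'" using sg_add[OF sU' u1(1) u2(1)] by simp
  have e2: "(c, a + \<rho> c) \<in> U'" using img ac by force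
  have "(c, a + \<rho> (c + x) + \<rho> x) + (c, a + \<rho> c) \<in> U'" using sg_add[OF sU' e1 e2] .
  moreover have "(c, a + \<rho> (c + x) + \<rho> x) + (c, a + \<rho> c) = (0, \<rho> (c + x) + \<rho> x + \<rho> c)"
    by (simp add: add_ac)
  ultimately have "(0, \<rho> (c + x) + \<rho> x + \<rho> c) \<in> feistel \<rho> ` U" using img by metis
  then obtain p q where pq: "(p, q) \<in> U" "(0, \<rho> (c + x) + \<rho> x + \<rho> c) = feistel \<rho> (p, q)" by force
  then have "q = 0" "p = \<rho> (c + x) + \<rho> x + \<rho> c" using r0 by auto
  then show ?thesis using pq(1) by simp
qed


definition Bf :: "('v::zero \<times> 'v) set \<Rightarrow> 'v set" where "Bf U = {b. (b, 0) \<in> U}"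
definition Cp :: "('v \<times> 'v) set \<Rightarrow> 'v set" where "Cp U = {c. \<exists>a. (a, c) \<in> U}"

lemma Veq0: "(a::bit^'s::finite^'b::finite) + b = 0 \<longleftrightarrow> a = b"
  by (metis Vadd_self Vadd_self2 add.commute add_0_right)

lemma proj_image:
  fixes U :: "((bit^'s::finite^'b::finite) \<times> (bit^'s^'b)) set"
  assumes "U' = feistel \<rho> ` U" "\<rho> 0 = 0"
  shows "first_proj U' = Cp U" "zero_fibre U' = Bf U"
proof -
  show "first_proj U' = Cp U"
  proof (rule set_eqI, rule iffI)
    fix c assume "c \<in> first_proj U'"
    then obtain y where "(c, y) \<in> U'" by (auto simp: first_proj_def)
    then obtain p q where "(p, q) \<in> U" "(c, y) = feistel \<rho> (p, q)" using assms(1) by force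
    then show "c \<in> Cp U" by (auto simp: Cp_def)
  next
    fix c assume "c \<in> Cp U"
    then obtain a where "(a, c) \<in> U" by (auto simp: Cp_def)
    then have "feistel \<rho> (a, c) \<in> U'" using assms(1) by blast
    then show "c \<in> first_proj U'" by (auto simp: first_proj_def)
  qed
  show "zero_fibre U' = Bf U"
  proof (rule set_eqI, rule iffI)
    fix d assume "d \<in> zero_fibre U'"
    then have "(0, d) \<in> U'" by (auto simp: zero_fibre_def)
    then obtain p q where "(p, q) \<in> U" "(0, d) = feistel \<rho> (p, q)" using assms(1) by force
    then show "d \<in> Bf U" using assms(2) by (auto simp: Bf_def)
  next
    fix d assume "d \<in> Bf U"
    then have "(d, 0) \<in> U" by (auto simp: Bf_def)
    then have "feistel \<rho> (d, 0) \<in> U'" using assms(1) by blast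
    then show "d \<in> zero_fibre U'" using assms(2) by (auto simp: zero_fibre_def)
  qed
qed

lemma cyc_incl:
  fixes U :: "((bit^'s::finite^'b::finite) \<times> (bit^'s^'b)) set"
  assumes i1: "U' = feistel \<rho> ` U" and i2: "U = feistel \<sigma> ` U'" and r0: "\<rho> 0 = 0" and s0: "\<sigma> 0 = 0"
    and sU: "is_subgroup U"
  shows "\<rho> ` zero_fibre U \<subseteq> Bf U"
proof
  fix y assume "y \<in> \<rho> ` zero_fibre U"
  then obtain d where d: "(0, d) \<in> U" "y = \<rho> d" by (auto simp: zero_fibre_def)
  from d(1) i2 obtain p q where pq: "(p, q) \<in> U'" "(0, d) = feistel \<sigma> (p, q)" by force
  then have "(d, 0) \<in> U'" using s0 by auto
  with i1 obtain a c where ac: "(a, c) \<in> U" "(d, 0) = feistel \<rho> (a, c)" by force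
  then have "c = d" "a + \<rho> d = 0" by auto
  then have "(\<rho> d, d) \<in> U" using ac(1) Veq0 by metis
  then have "(\<rho> d, d) + (0, d) \<in> U" using sg_add[OF sU _ d(1)] by blast
  then show "y \<in> Bf U" by (simp add: Bf_def d)
qed

lemma cyc_eq:
  fixes D B :: "(bit^'s::finite^'b::finite) set"
  assumes "\<rho> ` D \<subseteq> B" "\<sigma> ` B \<subseteq> D" "inj \<rho>" "inj \<sigma>"
  shows "\<rho> ` D = B"
proof -
  have c1: "card (\<rho> ` D) = card D" using assms(3) by (simp add: card_image inj_on_subset)
  have "card B = card (\<sigma> ` B)" using assms(4) by (simp add: card_image inj_on_subset)
  also have "\<dots> \<le> card D" using assms(2) finite_V by (rule card_mono[rotated])
  finally show ?thesis using c1 by (intro card_seteq[OF finite_V assms(1)]) simp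
qed

definition round_ok :: "(bit^'s::finite^'b::finite \<Rightarrow> bit^'s^'b) \<Rightarrow> bool" where
  "round_ok \<rho> \<longleftrightarrow> bij \<rho> \<and> \<rho> 0 = 0 \<and>
     (\<exists>L \<gamma> f (\<delta>::nat). \<rho> = L \<circ> \<gamma> \<and> parallel_with f \<gamma> \<and> 1 \<le> \<delta> \<and> \<delta> < CARD('s) \<and>
        (\<forall>j. weakly_uniform (2 ^ \<delta>) (f j) \<and> strongly_anti_invariant \<delta> (f j)) \<and>
        strongly_proper_diffusion L)"

lemma gamma_comp: "parallel_with f \<gamma> \<Longrightarrow> \<gamma> x $ k = f k (x $ k)"
  by (simp add: parallel_with_def)

lemma WU:
  fixes \<gamma> :: "bit^'s::finite^'b::finite \<Rightarrow> bit^'s^'b"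
  assumes par: "parallel_with f \<gamma>" and f0: "\<forall>k. f k 0 = 0"
    and wu: "weakly_uniform (2 ^ \<delta>) (f j)" and cj: "c $ j \<noteq> 0"
    and P: "\<forall>x. \<gamma> (c + x) + \<gamma> x + \<gamma> c \<in> Z"
  shows "real (card {y. axis j y \<in> Z}) > 2 ^ (CARD('s) - 1) / 2 ^ \<delta>"
proof -
  let ?S = "{f j x + f j (x + c $ j) | x. True}"
  have big: "real (card ?S) > 2 ^ (CARD('s) - 1) / 2 ^ \<delta>"
    using wu cj unfolding weakly_uniform_def by blast
  have sub: "(\<lambda>y. y + f j (c $ j)) ` ?S \<subseteq> {y. axis j y \<in> Z}"
  proof
    fix z assume "z \<in> (\<lambda>y. y + f j (c $ j)) ` ?S"
    then obtain t where z: "z = f j t + f j (t + c $ j) + f j (c $ j)" by blast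
    have "\<gamma> (c + axis j t) + \<gamma> (axis j t) + \<gamma> c = axis j z"
      unfolding vec_eq_iff by (auto simp: gamma_comp[OF par] axis_def z f0 add_ac)
    then show "z \<in> {y. axis j y \<in> Z}" using P by (metis mem_Collect_eq)
  qed
  have "inj (\<lambda>y. y + f j (c $ j))" by (rule injI) simp
  then have "card ?S = card ((\<lambda>y. y + f j (c $ j)) ` ?S)"
    by (simp add: card_image inj_on_subset)
  also have "\<dots> \<le> card {y. axis j y \<in> Z}" by (rule card_mono[OF finite_V1 sub])
  finally have "real (card ?S) \<le> real (card {y. axis j y \<in> Z})" by simp
  then show ?thesis using big by linarith
qed

lemma AI:
  fixes g :: "bit^'s::finite \<Rightarrow> bit^'s"
  assumes bj: "bij g" and sai: "strongly_anti_invariant \<delta> g" and dl: "\<delta> < CARD('s)"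
    and sD: "vec.subspace Dj" and sZ: "vec.subspace Zj" and im: "g ` Dj = Zj"
    and big: "real (card Zj) > 2 ^ (CARD('s) - 1) / 2 ^ \<delta>"
  shows "Zj = UNIV"
proof (rule ccontr)
  assume nU: "Zj \<noteq> UNIV"
  have g0: "g 0 = 0" using sai by (simp add: strongly_anti_invariant_def)
  have pw: "(2::real) ^ (CARD('s) - 1) / 2 ^ \<delta> = 2 ^ (CARD('s) - 1 - \<delta>)"
    using dl by (simp add: power_diff)
  have one: "(1::real) \<le> 2 ^ (CARD('s) - 1 - \<delta>)" by simp
  have Z0: "Zj \<noteq> {0}"
  proof
    assume "Zj = {0}"
    then have "real (card Zj) = 1" by simp
    then show False using big pw one by linarith
  qed
  have D0: "Dj \<noteq> {0}" using im g0 Z0 by auto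
  have DU: "Dj \<noteq> UNIV" using im nU bj by (auto simp: bij_def)
  from sai have "vec.dim Zj < CARD('s) - \<delta>"
    unfolding strongly_anti_invariant_def using sD sZ D0 Z0 DU nU im by blast
  then have "vec.dim Zj \<le> CARD('s) - 1 - \<delta>" by linarith
  then have "(2::nat) ^ vec.dim Zj \<le> 2 ^ (CARD('s) - 1 - \<delta>)" by (rule power_increasing) simp
  then have "card Zj \<le> 2 ^ (CARD('s) - 1 - \<delta>)" using card_subspace_le[OF sZ] by linarith
  then have "real (card Zj) \<le> 2 ^ (CARD('s) - 1 - \<delta>)"
    by (metis of_nat_le_iff of_nat_numeral of_nat_power)
  then show False using big pw by linarith
qed

lemma axis_add: "axis j (x + y) = axis j x + (axis j y :: 'a::monoid_add^'n::finite)"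
  by (simp add: vec_eq_iff axis_def)
lemma axis_zero: "axis j 0 = (0 :: 'a::zero^'n::finite)"
  by (simp add: vec_eq_iff axis_def)

lemma slice_subspace:
  fixes S :: "(bit^'s::finite^'b::finite) set"
  assumes "0 \<in> S" "\<forall>x\<in>S. \<forall>y\<in>S. x + y \<in> S"
  shows "vec.subspace {y. axis j y \<in> S}"
proof (rule vec.subspaceI)
  show "0 \<in> {y. axis j y \<in> S}" using assms(1) by (simp add: axis_zero)
  show "x + y \<in> {y. axis j y \<in> S}" if "x \<in> {y. axis j y \<in> S}" "y \<in> {y. axis j y \<in> S}" for x y
    using that assms(2) by (simp add: axis_add)
  show "c *s x \<in> {y. axis j y \<in> S}" if "x \<in> {y. axis j y \<in> S}" for c x
    using that assms(1) bit_cases2[of c] by (auto simp: axis_zero)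
qed

lemma sum_closed:
  assumes "0 \<in> S" "\<forall>x\<in>S. \<forall>y\<in>S. x + y \<in> S" "finite I" "\<forall>i\<in>I. g i \<in> S"
  shows "sum g I \<in> S"
  using assms(3,4) by (induction I rule: finite_induct) (auto simp: assms(1,2))

lemma wall_sum:
  fixes x :: "'a::comm_monoid_add^'b::finite"
  assumes "x \<in> wall J"
  shows "x = (\<Sum>j\<in>J. axis j (x $ j))"
  using assms unfolding wall_def vec_eq_iff by (auto simp: axis_def)


lemma round_wall:
  fixes \<rho> :: "bit^'s::finite^'b::finite \<Rightarrow> bit^'s^'b"
  assumes ro: "round_ok \<rho>"
    and D0: "0 \<in> Dset" and Dadd: "\<forall>x\<in>Dset. \<forall>y\<in>Dset. x + y \<in> Dset"
    and Badd: "\<forall>x\<in>Bset. \<forall>y\<in>Bset. x + y \<in> Bset"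
    and DC: "Dset \<subseteq> Cset" and im: "\<rho> ` Dset = Bset"
    and P: "\<forall>c\<in>Cset. \<forall>x. \<rho> (c + x) + \<rho> x + \<rho> c \<in> Bset"
  shows "Dset = wall {j. \<exists>c\<in>Cset. c $ j \<noteq> 0} \<and>
         (\<exists>L. strongly_proper_diffusion L \<and> Bset = L ` Dset)"
proof -
  obtain L \<gamma> f and \<delta> :: nat where rL: "\<rho> = L \<circ> \<gamma>" and par: "parallel_with f \<gamma>"
    and dl: "\<delta> < CARD('s)" and fj: "\<forall>j. weakly_uniform (2 ^ \<delta>) (f j) \<and> strongly_anti_invariant \<delta> (f j)"
    and spd: "strongly_proper_diffusion L"
    using ro unfolding round_ok_def by blast
  have Llin: "Vector_Spaces.linear scaleV scaleV L" and Lbij: "bij L"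
    using spd by (auto simp: strongly_proper_diffusion_def)
  have f0: "\<forall>k. f k 0 = 0" using fj by (simp add: strongly_anti_invariant_def)
  have fbij: "\<forall>k. bij (f k)" using par by (simp add: parallel_with_def)
  have g0: "\<gamma> 0 = 0" by (simp add: vec_eq_iff gamma_comp[OF par] f0)
  define Z where "Z = {z. L z \<in> Bset}"
  have Lg: "\<And>x. \<rho> x = L (\<gamma> x)" using rL by simp
  have gD: "\<gamma> ` Dset = Z"
  proof (rule set_eqI, rule iffI)
    fix z assume "z \<in> \<gamma> ` Dset"
    then show "z \<in> Z" using im Lg unfolding Z_def by auto
  next
    fix z assume "z \<in> Z"
    then have "L z \<in> \<rho> ` Dset" using im unfolding Z_def by simp
    then obtain d where d: "d \<in> Dset" "L z = L (\<gamma> d)" using Lg by auto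
    then have "z = \<gamma> d" using bij_is_inj[OF Lbij] by (simp add: inj_eq)
    then show "z \<in> \<gamma> ` Dset" using d(1) by blast
  qed
  have Z0: "0 \<in> Z" using gD D0 g0 by force
  have Zadd: "\<forall>x\<in>Z. \<forall>y\<in>Z. x + y \<in> Z"
    using Badd lin_add[OF Llin] unfolding Z_def by simp
  have PZ: "\<forall>c\<in>Cset. \<forall>x. \<gamma> (c + x) + \<gamma> x + \<gamma> c \<in> Z"
    using P lin_add[OF Llin] Lg unfolding Z_def by simp
  define J where "J = {j. \<exists>c\<in>Cset. c $ j \<noteq> 0}"
  have gax: "\<And>j y. \<gamma> (axis j y) = axis j (f j y)"
    by (simp add: vec_eq_iff gamma_comp[OF par] axis_def f0)
  have slice: "axis j y \<in> Dset \<and> axis j y \<in> Z" if jJ: "j \<in> J" for j y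
  proof -
    obtain c where c: "c \<in> Cset" "c $ j \<noteq> 0" using jJ unfolding J_def by blast
    have big: "real (card {y. axis j y \<in> Z}) > 2 ^ (CARD('s) - 1) / 2 ^ \<delta>"
      by (rule WU[OF par f0 conjunct1[OF fj[rule_format, of j]] c(2)]) (use PZ c(1) in blast)
    have sD: "vec.subspace {y. axis j y \<in> Dset}" by (rule slice_subspace[OF D0 Dadd])
    have sZ: "vec.subspace {y. axis j y \<in> Z}" by (rule slice_subspace[OF Z0 Zadd])
    have imj: "f j ` {y. axis j y \<in> Dset} = {y. axis j y \<in> Z}"
    proof (rule set_eqI, rule iffI)
      fix z assume "z \<in> f j ` {y. axis j y \<in> Dset}"
      then obtain y where "axis j y \<in> Dset" "z = f j y" by blast
      then show "z \<in> {y. axis j y \<in> Z}" using gD gax by (metis image_eqI mem_Collect_eq)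
    next
      fix z assume "z \<in> {y. axis j y \<in> Z}"
      then have "axis j z \<in> \<gamma> ` Dset" using gD by simp
      then obtain d where d: "d \<in> Dset" "axis j z = \<gamma> d" by blast
      have comp: "\<And>k. (axis j z) $ k = f k (d $ k)" using d(2) gamma_comp[OF par] by simp
      have "d $ k = 0" if "k \<noteq> j" for k
      proof -
        have "f k (d $ k) = f k 0" using comp[of k] that f0 by (simp add: axis_def)
        then show ?thesis using bij_is_inj[OF fbij[rule_format, of k]] by (simp add: inj_eq)
      qed
      then have "d = axis j (d $ j)" by (auto simp: vec_eq_iff axis_def)
      moreover have "z = f j (d $ j)" using comp[of j] by simp
      ultimately show "z \<in> f j ` {y. axis j y \<in> Dset}" using d(1) by (metis image_eqI mem_Collect_eq)
    qed
    have ZU: "{y. axis j y \<in> Z} = UNIV"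
      using AI[OF fbij[rule_format, of j] conjunct2[OF fj[rule_format, of j]] dl sD sZ imj big] .
    have "y \<in> {y. axis j y \<in> Dset}"
    proof -
      have "f j y \<in> f j ` {y. axis j y \<in> Dset}" using imj ZU by simp
      then show ?thesis using bij_is_inj[OF fbij[rule_format, of j]] by (auto simp: inj_eq)
    qed
    then show ?thesis using ZU by auto
  qed
  have finJ: "finite J" by simp
  have WD: "wall J \<subseteq> Dset"
  proof
    fix x :: "bit^'s^'b" assume "x \<in> wall J"
    then have "x = (\<Sum>j\<in>J. axis j (x $ j))" by (rule wall_sum)
    moreover have "(\<Sum>j\<in>J. axis j (x $ j)) \<in> Dset"
      by (intro sum_closed[OF D0 Dadd finJ] ballI) (simp add: slice)
    ultimately show "x \<in> Dset" by simp
  qed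
  have DW: "Dset \<subseteq> wall J"
    using DC unfolding wall_def J_def by auto
  have Deq: "Dset = wall J" using WD DW by blast
  have "Bset = L ` Dset"
  proof -
    have "Bset = \<rho> ` Dset" using im by simp
    also have "\<dots> = L ` (\<gamma> ` Dset)" using rL by (simp add: image_comp)
    also have "\<dots> = L ` Z" using gD by simp
    also have "Z = Dset"
    proof
      show "Z \<subseteq> Dset"
      proof
        fix z assume "z \<in> Z"
        then obtain d where d: "d \<in> Dset" "z = \<gamma> d" using gD by blast
        have "d \<in> wall J" using d(1) DW by blast
        then have "z \<in> wall J" using d(2) f0 unfolding wall_def by (simp add: gamma_comp[OF par])
        then show "z \<in> Dset" using WD by blast
      qed
      show "Dset \<subseteq> Z"
      proof
        fix x :: "bit^'s^'b" assume "x \<in> Dset"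
        then have "x \<in> wall J" using DW by blast
        then have "x = (\<Sum>j\<in>J. axis j (x $ j))" by (rule wall_sum)
        moreover have "(\<Sum>j\<in>J. axis j (x $ j)) \<in> Z"
          by (intro sum_closed[OF Z0 Zadd finJ] ballI) (simp add: slice)
        ultimately show "x \<in> Z" by simp
      qed
    qed
    finally show ?thesis .
  qed
  then show ?thesis unfolding J_def[symmetric] using Deq spd by (intro conjI exI[of _ L]) auto
qed


lemma sg_fibres:
  fixes U :: "((bit^'s::finite^'b::finite) \<times> (bit^'s^'b)) set"
  assumes sU: "is_subgroup U"
  shows "0 \<in> zero_fibre U" "\<forall>x\<in>zero_fibre U. \<forall>y\<in>zero_fibre U. x + y \<in> zero_fibre U"
    "0 \<in> Bf U" "\<forall>x\<in>Bf U. \<forall>y\<in>Bf U. x + y \<in> Bf U"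
    "zero_fibre U \<subseteq> Cp U" "Bf U \<subseteq> first_proj U"
proof -
  have z: "(0, 0) \<in> U" using sg_zero[OF sU] by (simp add: zero_prod_def)
  then show "0 \<in> zero_fibre U" "0 \<in> Bf U" by (auto simp: zero_fibre_def Bf_def)
  show "\<forall>x\<in>zero_fibre U. \<forall>y\<in>zero_fibre U. x + y \<in> zero_fibre U"
  proof (intro ballI)
    fix x y assume "x \<in> zero_fibre U" "y \<in> zero_fibre U"
    then have "(0, x) \<in> U" "(0, y) \<in> U" by (auto simp: zero_fibre_def)
    then have "(0, x) + (0, y) \<in> U" by (rule sg_add[OF sU])
    then show "x + y \<in> zero_fibre U" by (simp add: zero_fibre_def)
  qed
  show "\<forall>x\<in>Bf U. \<forall>y\<in>Bf U. x + y \<in> Bf U"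
  proof (intro ballI)
    fix x y assume "x \<in> Bf U" "y \<in> Bf U"
    then have "(x, 0) \<in> U" "(y, 0) \<in> U" by (auto simp: Bf_def)
    then have "(x, 0) + (y, 0) \<in> U" by (rule sg_add[OF sU])
    then show "x + y \<in> Bf U" by (simp add: Bf_def)
  qed
  show "zero_fibre U \<subseteq> Cp U" "Bf U \<subseteq> first_proj U"
    by (auto simp: zero_fibre_def Cp_def Bf_def first_proj_def)
qed

lemma U_full:
  fixes U :: "((bit^'s::finite^'b::finite) \<times> (bit^'s^'b)) set"
  assumes sU: "is_subgroup U" and B: "Bf U = UNIV" and D: "zero_fibre U = UNIV"
  shows "U = UNIV"
proof -
  have "(a, c) \<in> U" for a c
  proof -
    have "(a, 0) \<in> U" "(0, c) \<in> U" using B D by (auto simp: Bf_def zero_fibre_def)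
    then have "(a, 0) + (0, c) \<in> U" by (rule sg_add[OF sU])
    then show ?thesis by simp
  qed
  then show ?thesis by (auto intro: prod.exhaust)
qed

lemma cycle_false:
  fixes U U' :: "((bit^'s::finite^'b::finite) \<times> (bit^'s^'b)) set"
  assumes rr: "round_ok \<rho>" and rs: "round_ok \<sigma>"
    and sU: "is_subgroup U" and sU': "is_subgroup U'" and U0: "U \<noteq> {0}" and UU: "U \<noteq> UNIV"
    and ch1: "part_image (lin_partition U) (feistel \<rho>) = lin_partition U'"
    and ch2: "part_image (lin_partition U') (feistel \<sigma>) = lin_partition U"
  shows False
proof -
  have r0: "\<rho> 0 = 0" and rb: "bij \<rho>" using rr by (auto simp: round_ok_def)
  have s0: "\<sigma> 0 = 0" and sb: "bij \<sigma>" using rs by (auto simp: round_ok_def)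
  have img1: "U' = feistel \<rho> ` U" using chain_image[OF sU sU' r0 ch1] by simp
  have img2: "U = feistel \<sigma> ` U'" using chain_image[OF sU' sU s0 ch2] by simp
  note pr1 = proj_image[OF img1 r0]
  note pr2 = proj_image[OF img2 s0]
  have inc1: "\<rho> ` zero_fibre U \<subseteq> Bf U" by (rule cyc_incl[OF img1 img2 r0 s0 sU])
  have "\<sigma> ` zero_fibre U' \<subseteq> Bf U'" by (rule cyc_incl[OF img2 img1 s0 r0 sU'])
  then have inc2: "\<sigma> ` Bf U \<subseteq> zero_fibre U" using pr1(2) pr2(2) by simp
  have eq1: "\<rho> ` zero_fibre U = Bf U"
    by (rule cyc_eq[OF inc1 inc2 bij_is_inj[OF rb] bij_is_inj[OF sb]])
  have eq2: "\<sigma> ` Bf U = zero_fibre U"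
    by (rule cyc_eq[OF inc2 inc1 bij_is_inj[OF sb] bij_is_inj[OF rb]])
  note F = sg_fibres[OF sU]
  have P1: "\<forall>c\<in>Cp U. \<forall>x. \<rho> (c + x) + \<rho> x + \<rho> c \<in> Bf U"
    using chain_P[OF sU sU' r0 ch1] by (auto simp: Cp_def Bf_def)
  have P2: "\<forall>c\<in>first_proj U. \<forall>x. \<sigma> (c + x) + \<sigma> x + \<sigma> c \<in> zero_fibre U"
  proof -
    have "\<forall>c\<in>Cp U'. \<forall>x. \<sigma> (c + x) + \<sigma> x + \<sigma> c \<in> Bf U'"
      using chain_P[OF sU' sU s0 ch2] by (auto simp: Cp_def Bf_def)
    then show ?thesis using pr2 by simp
  qed
  define J1 where "J1 = {j. \<exists>c\<in>Cp U. c $ j \<noteq> 0}"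
  define J2 where "J2 = {j. \<exists>c\<in>first_proj U. c $ j \<noteq> 0}"
  obtain L where W1: "zero_fibre U = wall J1" and spd: "strongly_proper_diffusion L"
    and BL: "Bf U = L ` zero_fibre U"
    using round_wall[OF rr F(1) F(2) F(4) F(5) eq1 P1] unfolding J1_def by blast
  have W2: "Bf U = wall J2"
    using round_wall[OF rs F(3) F(4) F(2) F(6) eq2 P2] unfolding J2_def by blast
  have wall0: "wall {} = {0::bit^'s^'b}" by (auto simp: wall_def vec_eq_iff)
  have wallU: "wall UNIV = (UNIV::(bit^'s^'b) set)" by (auto simp: wall_def)
  have U0': "0 \<in> U" by (rule sg_zero[OF sU])
  have J1e: "J1 \<noteq> {}"
  proof
    assume J: "J1 = {}"
    then have D: "zero_fibre U = {0}" using W1 wall0 by simp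
    then have B: "Bf U = {0}" using eq1 r0 by auto
    have "U \<subseteq> {0}"
    proof
      fix u assume uU: "u \<in> U"
      obtain a c where u: "u = (a, c)" by (cases u)
      have "c \<in> Cp U" using uU u by (auto simp: Cp_def)
      then have "c = 0" using J unfolding J1_def by (auto simp: vec_eq_iff)
      then have "a \<in> Bf U" using uU u by (simp add: Bf_def)
      then show "u \<in> {0}" using B u \<open>c = 0\<close> by (simp add: zero_prod_def)
    qed
    then show False using U0 U0' by blast
  qed
  have J2e: "J2 \<noteq> {}"
  proof
    assume J: "J2 = {}"
    then have B: "Bf U = {0}" using W2 wall0 by simp
    then have D: "zero_fibre U = {0}" using eq2 s0 by auto
    have "U \<subseteq> {0}"
    proof
      fix u assume uU: "u \<in> U"
      obtain a c where u: "u = (a, c)" by (cases u)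
      have "a \<in> first_proj U" using uU u by (auto simp: first_proj_def)
      then have "a = 0" using J unfolding J2_def by (auto simp: vec_eq_iff)
      then have "c \<in> zero_fibre U" using uU u by (simp add: zero_fibre_def)
      then show "u \<in> {0}" using D u \<open>a = 0\<close> by (simp add: zero_prod_def)
    qed
    then show False using U0 U0' by blast
  qed
  have J1U: "J1 \<noteq> UNIV"
  proof
    assume "J1 = UNIV"
    then have D: "zero_fibre U = UNIV" using W1 wallU by simp
    then have "Bf U = UNIV" using eq1 rb by (metis bij_def surj_def image_iff UNIV_eq_I)
    then show False using U_full[OF sU _ D] UU by simp
  qed
  have J2U: "J2 \<noteq> UNIV"
  proof
    assume "J2 = UNIV"
    then have B: "Bf U = UNIV" using W2 wallU by simp
    then have "zero_fibre U = UNIV" using eq2 sb by (metis bij_def surj_def image_iff UNIV_eq_I)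
    then show False using U_full[OF sU B] UU by simp
  qed
  have "is_wall (wall J1)" "is_wall (wall J2)"
    using J1e J1U J2e J2U unfolding is_wall_def by blast+
  moreover have "L ` wall J1 = wall J2" using BL W1 W2 by simp
  ultimately show False using spd unfolding strongly_proper_diffusion_def by blast
qed


lemma cond3_false:
  fixes U U' :: "((bit^'s::finite^'b::finite) \<times> (bit^'s^'b)) set"
  assumes rr: "round_ok \<rho>" and sU: "is_subgroup U" and sU': "is_subgroup U'" and U0: "U \<noteq> {0}"
    and ch1: "part_image (lin_partition U) (feistel \<rho>) = lin_partition U'"
    and D1: "zero_fibre U = {0}" and D2: "zero_fibre U' = {0}"
  shows False
proof -
  have r0: "\<rho> 0 = 0" using rr by (simp add: round_ok_def)
  have img1: "U' = feistel \<rho> ` U" using chain_image[OF sU sU' r0 ch1] by simp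
  have B: "Bf U = {0}" using proj_image(2)[OF img1 r0] D2 by simp
  obtain a c where ac: "(a, c) \<in> U" "c \<noteq> 0"
  proof (rule ccontr)
    assume "\<not> thesis"
    then have "\<forall>a c. (a, c) \<in> U \<longrightarrow> c = 0" using that by blast
    then have "U \<subseteq> {0}" using B by (force simp: Bf_def zero_prod_def)
    then show False using U0 sg_zero[OF sU] by blast
  qed
  obtain j where cj: "c $ j \<noteq> 0" using ac(2) by (auto simp: vec_eq_iff)
  have P: "\<forall>x. \<rho> (c + x) + \<rho> x + \<rho> c = 0"
    using chain_P[OF sU sU' r0 ch1 ac(1)] B by (auto simp: Bf_def)
  obtain L \<gamma> f and \<delta> :: nat where rL: "\<rho> = L \<circ> \<gamma>" and par: "parallel_with f \<gamma>"
    and dl: "\<delta> < CARD('s)" and fj: "\<forall>j. weakly_uniform (2 ^ \<delta>) (f j) \<and> strongly_anti_invariant \<delta> (f j)"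
    and spd: "strongly_proper_diffusion L"
    using rr unfolding round_ok_def by blast
  have Llin: "Vector_Spaces.linear scaleV scaleV L" and Lbij: "bij L"
    using spd by (auto simp: strongly_proper_diffusion_def)
  have f0: "\<forall>k. f k 0 = 0" using fj by (simp add: strongly_anti_invariant_def)
  have g0: "\<gamma> 0 = 0" by (simp add: vec_eq_iff gamma_comp[OF par] f0)
  have L0: "L 0 = 0" using r0 g0 rL by simp
  have PZ: "\<forall>x. \<gamma> (c + x) + \<gamma> x + \<gamma> c \<in> {0}"
  proof
    fix x
    have "L (\<gamma> (c + x) + \<gamma> x + \<gamma> c) = L 0" using P[rule_format, of x] lin_add[OF Llin] rL L0 by simp
    then show "\<gamma> (c + x) + \<gamma> x + \<gamma> c \<in> {0}" using bij_is_inj[OF Lbij] by (simp add: inj_eq)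
  qed
  have big: "real (card {y. axis j y \<in> {0::bit^'s^'b}}) > 2 ^ (CARD('s) - 1) / 2 ^ \<delta>"
    by (rule WU[OF par f0 conjunct1[OF fj[rule_format, of j]] cj PZ])
  have "{y. axis j y \<in> {0::bit^'s^'b}} = {0}"
    using axis_eq_axis[of j _ j 0] by (auto simp: axis_zero)
  then have c1: "real (card {y. axis j y \<in> {0::bit^'s^'b}}) = 1" by simp
  have pw: "(2::real) ^ (CARD('s) - 1) / 2 ^ \<delta> = 2 ^ (CARD('s) - 1 - \<delta>)"
    using dl by (simp add: power_diff)
  have "(1::real) \<le> 2 ^ (CARD('s) - 1 - \<delta>)" by simp
  then show False using big c1 pw by linarith
qed

lemma cond4_false:
  fixes U U' :: "((bit^'s::finite^'b::finite) \<times> (bit^'s^'b)) set"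
  assumes r0: "\<rho> 0 = 0" and sU: "is_subgroup U" and sU': "is_subgroup U'" and U0: "U \<noteq> {0}"
    and ch1: "part_image (lin_partition U) (feistel \<rho>) = lin_partition U'"
    and A1: "first_proj U = {0}" and A2: "first_proj U' = {0}"
  shows False
proof -
  have img1: "U' = feistel \<rho> ` U" using chain_image[OF sU sU' r0 ch1] by simp
  have C: "Cp U = {0}" using proj_image(1)[OF img1 r0] A2 by simp
  have "U \<subseteq> {0}"
  proof
    fix u assume uU: "u \<in> U"
    obtain a c where u: "u = (a, c)" by (cases u)
    have "a \<in> first_proj U" "c \<in> Cp U" using uU u by (auto simp: first_proj_def Cp_def)
    then show "u \<in> {0}" using A1 C u by (simp add: zero_prod_def)
  qed
  then show False using U0 sg_zero[OF sU] by blast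
qed

lemma prod_image:
  fixes U :: "((bit^'s::finite^'b::finite) \<times> (bit^'s^'b)) set"
  assumes "U' = feistel \<rho> ` U" "\<rho> 0 = 0" "U = P \<times> Q" "0 \<in> U"
  shows "first_proj U' = Q" "zero_fibre U' = P"
proof -
  have "0 \<in> P" "0 \<in> Q" using assms(3,4) by (auto simp: zero_prod_def)
  then show "first_proj U' = Q" "zero_fibre U' = P"
    using proj_image[OF assms(1,2)] assms(3) by (auto simp: Cp_def Bf_def)
qed

theorem theorem4p11:
  fixes r :: nat
    and \<rho> \<gamma> L :: "nat \<Rightarrow> bit ^ 's::finite ^ 'b::finite \<Rightarrow> bit ^ 's ^ 'b"
    and \<U> :: "nat \<Rightarrow> ((bit ^ 's ^ 'b) \<times> (bit ^ 's ^ 'b)) set"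
  defines "A \<equiv> \<lambda>i. first_proj (\<U> i)"
    and "D \<equiv> \<lambda>i. zero_fibre (\<U> i)"
  assumes r: "r \<ge> 2"
    and rho_sym: "\<forall>i\<in>{1..r}. bij (\<rho> i)"
    and rho_zero: "\<forall>i\<in>{1..r}. \<rho> i 0 = 0"
    and rho_decomp: "\<forall>i\<in>{1..r}. \<rho> i = L i \<circ> \<gamma> i"
    and gamma: "\<forall>i\<in>{1..r}. \<exists>\<delta>::nat. 1 \<le> \<delta> \<and> \<delta> < CARD('s) \<and>
                  (\<exists>f. parallel_with f (\<gamma> i) \<and>
                       (\<forall>j. weakly_uniform (2 ^ \<delta>) (f j) \<and> strongly_anti_invariant \<delta> (f j)))"
    and lambda: "\<forall>i\<in>{1..r}. strongly_proper_diffusion (L i)"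
    and U_sub: "\<forall>i\<in>{1..r+1}. is_subgroup (\<U> i) \<and> \<U> i \<noteq> {0} \<and> \<U> i \<noteq> UNIV"
    and U_nontriv: "\<forall>i\<in>{1..r+1}. nontrivial_partition (lin_partition (\<U> i))"
    and U_chain: "\<forall>i\<in>{1..r}.
                    part_image (lin_partition (\<U> i)) (feistel (\<rho> i)) = lin_partition (\<U> (i + 1))"
  shows "\<not> (\<exists>i\<in>{1..r-1}.
              part_image (lin_partition (\<U> (i + 1))) (feistel (\<rho> (i + 1))) = lin_partition (\<U> i))
       \<and> \<not> (\<exists>i\<in>{1..r-1}. \<U> i = A i \<times> D i \<and> \<U> (i + 1) = A (i + 1) \<times> D (i + 1)
                         \<and> \<U> (i + 2) = A (i + 2) \<times> D (i + 2))
       \<and> \<not> (\<exists>i\<in>{1..r}. D i = {0} \<and> D (i + 1) = {0})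
       \<and> \<not> (\<exists>i\<in>{1..r}. A i = {0} \<and> A (i + 1) = {0})"
proof -
  have RO: "round_ok (\<rho> i)" if i: "i \<in> {1..r}" for i
  proof -
    have "\<exists>\<delta>::nat. 1 \<le> \<delta> \<and> \<delta> < CARD('s) \<and>
                  (\<exists>f. parallel_with f (\<gamma> i) \<and>
                       (\<forall>j. weakly_uniform (2 ^ \<delta>) (f j) \<and> strongly_anti_invariant \<delta> (f j)))"
      using gamma i by simp
    then obtain \<delta> :: nat and f where d: "1 \<le> \<delta>" "\<delta> < CARD('s)" "parallel_with f (\<gamma> i)"
      "\<forall>j. weakly_uniform (2 ^ \<delta>) (f j) \<and> strongly_anti_invariant \<delta> (f j)"
      by (elim exE conjE)
    have h: "bij (\<rho> i)" "\<rho> i 0 = 0" "\<rho> i = L i \<circ> \<gamma> i" "strongly_proper_diffusion (L i)"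
      using i rho_sym rho_zero rho_decomp lambda by auto
    show ?thesis unfolding round_ok_def
      by (intro conjI exI[of _ "L i"] exI[of _ "\<gamma> i"] exI[of _ f] exI[of _ \<delta>]) (use d h in auto)
  qed
  have SG: "is_subgroup (\<U> i)" "\<U> i \<noteq> {0}" "\<U> i \<noteq> UNIV" if "i \<in> {1..r+1}" for i
    using that U_sub by blast+
  have CH: "part_image (lin_partition (\<U> i)) (feistel (\<rho> i)) = lin_partition (\<U> (i + 1))"
    if "i \<in> {1..r}" for i using that U_chain by blast
  have r0: "\<rho> i 0 = 0" if "i \<in> {1..r}" for i using that rho_zero by blast
  show ?thesis
  proof (intro conjI notI)
    assume "\<exists>i\<in>{1..r-1}. part_image (lin_partition (\<U> (i + 1))) (feistel (\<rho> (i + 1))) = lin_partition (\<U> i)"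
    then obtain i where i: "i \<in> {1..r-1}"
      and h: "part_image (lin_partition (\<U> (i + 1))) (feistel (\<rho> (i + 1))) = lin_partition (\<U> i)" by blast
    have i1: "i \<in> {1..r}" "i + 1 \<in> {1..r}" "i \<in> {1..r+1}" "i + 1 \<in> {1..r+1}" using i r by auto
    show False
      by (rule cycle_false[OF RO[OF i1(1)] RO[OF i1(2)] SG(1)[OF i1(3)] SG(1)[OF i1(4)]
            SG(2)[OF i1(3)] SG(3)[OF i1(3)] CH[OF i1(1)] h])
  next
    assume "\<exists>i\<in>{1..r-1}. \<U> i = A i \<times> D i \<and> \<U> (i + 1) = A (i + 1) \<times> D (i + 1)
                         \<and> \<U> (i + 2) = A (i + 2) \<times> D (i + 2)"
    then obtain i where i: "i \<in> {1..r-1}" and p1: "\<U> i = A i \<times> D i"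
      and p2: "\<U> (i + 1) = A (i + 1) \<times> D (i + 1)" and p3: "\<U> (i + 2) = A (i + 2) \<times> D (i + 2)" by blast
    have i1: "i \<in> {1..r}" "i + 1 \<in> {1..r}" "i \<in> {1..r+1}" "i + 1 \<in> {1..r+1}" "i + 2 \<in> {1..r+1}"
      using i r by auto
    have img1: "\<U> (i + 1) = feistel (\<rho> i) ` \<U> i"
      using chain_image[OF SG(1)[OF i1(3)] SG(1)[OF i1(4)] r0[OF i1(1)] CH[OF i1(1)]] by simp
    have CH2: "part_image (lin_partition (\<U> (i + 1))) (feistel (\<rho> (i + 1))) = lin_partition (\<U> (i + 2))"
      using CH[OF i1(2)] by (metis one_add_one add.assoc)
    have img2: "\<U> (i + 2) = feistel (\<rho> (i + 1)) ` \<U> (i + 1)"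
      using chain_image[OF SG(1)[OF i1(4)] SG(1)[OF i1(5)] r0[OF i1(2)] CH2] by simp
    note q1 = prod_image[OF img1 r0[OF i1(1)] p1 sg_zero[OF SG(1)[OF i1(3)]]]
    have Adef: "\<And>k. A k = first_proj (\<U> k)" and Ddef: "\<And>k. D k = zero_fibre (\<U> k)"
      unfolding A_def D_def by simp_all
    have a1: "A (i + 1) = D i" "D (i + 1) = A i" using q1 by (simp_all add: Adef Ddef)
    have p2': "\<U> (i + 1) = D i \<times> A i" using p2 a1 by simp
    note q2 = prod_image[OF img2 r0[OF i1(2)] p2' sg_zero[OF SG(1)[OF i1(4)]]]
    have a2: "A (i + 2) = A i" "D (i + 2) = D i" using q2 by (simp_all add: Adef Ddef)
    have eq: "\<U> (i + 2) = \<U> i" using p3 p1 a2 by simp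
    have ch2: "part_image (lin_partition (\<U> (i + 1))) (feistel (\<rho> (i + 1))) = lin_partition (\<U> i)"
      using CH2 eq by simp
    show False
      by (rule cycle_false[OF RO[OF i1(1)] RO[OF i1(2)] SG(1)[OF i1(3)] SG(1)[OF i1(4)]
            SG(2)[OF i1(3)] SG(3)[OF i1(3)] CH[OF i1(1)] ch2])
  next
    assume "\<exists>i\<in>{1..r}. D i = {0} \<and> D (i + 1) = {0}"
    then obtain i where i: "i \<in> {1..r}" and d: "D i = {0}" "D (i + 1) = {0}"
      by (elim bexE conjE) (rule that)
    have i1: "i \<in> {1..r+1}" "i + 1 \<in> {1..r+1}" using i by auto
    have d': "zero_fibre (\<U> i) = {0}" "zero_fibre (\<U> (i + 1)) = {0}"
      using d unfolding D_def by simp_all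
    show False
      by (rule cond3_false[OF RO[OF i] SG(1)[OF i1(1)] SG(1)[OF i1(2)] SG(2)[OF i1(1)] CH[OF i] d'])
  next
    assume "\<exists>i\<in>{1..r}. A i = {0} \<and> A (i + 1) = {0}"
    then obtain i where i: "i \<in> {1..r}" and a: "A i = {0}" "A (i + 1) = {0}"
      by (elim bexE conjE) (rule that)
    have i1: "i \<in> {1..r+1}" "i + 1 \<in> {1..r+1}" using i by auto
    have a': "first_proj (\<U> i) = {0}" "first_proj (\<U> (i + 1)) = {0}"
      using a unfolding A_def by simp_all
    show False
      by (rule cond4_false[OF r0[OF i] SG(1)[OF i1(1)] SG(1)[OF i1(2)] SG(2)[OF i1(1)] CH[OF i] a'])
  qed
qed

end
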